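(* Let $X\subset[0,1]$ with $\overline{\dim}_B(X)=a$. Then $\overline{\dim}_{GB}(X)\ge 2a$.
   Context: For $\delta>0$ and $F\subset\mathbb{R}^d$, $N_\delta(F)$ is the number of cubes of the standard $\delta$-grid in $\mathbb{R}^d$ that intersect $F$, and $\overline{\dim}_B(F)=\limsup_{\delta\to0}\frac{\log N_\delta(F)}{-\log\delta}$. $C_u(X)$ is the set of uniformly continuous real functions on $X$, $\mathrm{graph}(f)=\{(x,f(x)):x\in X\}$, and $\overline{\dim}_{GB}(X)=\sup_{f\in C_u(X)}\overline{\dim}_B(\mathrm{graph}(f))$. *)

theory Defs
  imports "HOL-Analysis.Analysis"
begin

text \<open>A grid cube is indexed by an
  integer vector k (coordinates w.r.t. the standard basis); it is the closed cube
  prod over i of [k_i delta, (k_i+1) delta].\<close>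
definition grid_count :: "real \<Rightarrow> 'a::euclidean_space set \<Rightarrow> nat" where
  "grid_count \<delta> F = card {k :: 'a \<Rightarrow> int. (\<forall>i. i \<notin> Basis \<longrightarrow> k i = 0) \<and>
      (\<exists>x\<in>F. \<forall>i\<in>Basis. of_int (k i) * \<delta> \<le> x \<bullet> i \<and> x \<bullet> i \<le> (of_int (k i) + 1) * \<delta>)}"

definition upper_box_dim :: "'a::euclidean_space set \<Rightarrow> ereal" where
  "upper_box_dim F = Limsup (at_right 0) (\<lambda>\<delta>. ereal (ln (real (grid_count \<delta> F)) / - ln \<delta>))"

definition graph_of :: "real set \<Rightarrow> (real \<Rightarrow> real) \<Rightarrow> (real \<times> real) set" where
  "graph_of X f = {(x, f x) | x. x \<in> X}"

definition upper_graph_box_dim :: "real set \<Rightarrow> ereal" where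
  "upper_graph_box_dim X =
     (SUP f \<in> {f :: real \<Rightarrow> real. uniformly_continuous_on X f}. upper_box_dim (graph_of X f))"

end

theory Submission
  imports Defs
begin


lemma floor_eq_close:
  fixes a b e :: real
  assumes "e > 0" "\<lfloor>a/e\<rfloor> = \<lfloor>b/e\<rfloor>"
  shows "\<bar>a - b\<bar> < e"
proof -
  have "\<bar>a/e - b/e\<bar> < 1" using assms(2) by linarith
  then have "\<bar>(a - b)/e\<bar> < 1" by (simp add: diff_divide_distrib)
  then show ?thesis using assms(1) by (simp add: abs_divide)
qed

lemma grid_set_finite:
  fixes F :: "'a::euclidean_space set"
  assumes "bounded F" "\<delta> > 0"
  shows "finite {k :: 'a \<Rightarrow> int. (\<forall>i. i \<notin> Basis \<longrightarrow> k i = 0) \<and>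
      (\<exists>x\<in>F. \<forall>i\<in>Basis. of_int (k i) * \<delta> \<le> x \<bullet> i \<and> x \<bullet> i \<le> (of_int (k i) + 1) * \<delta>)}"
proof -
  obtain M where M: "\<forall>x\<in>F. norm x \<le> M" using assms(1) bounded_iff by blast
  define B where "B = {\<lceil>-M/\<delta>\<rceil> - 1 .. \<lfloor>M/\<delta>\<rfloor>}"
  have fin: "finite {k::'a\<Rightarrow>int. \<forall>i. (i \<in> Basis \<longrightarrow> k i \<in> B) \<and> (i \<notin> Basis \<longrightarrow> k i = 0)}"
    by (rule finite_set_of_finite_funs) (auto simp: B_def)
  have key: "k i \<in> B" if i: "i \<in> Basis" and x: "x \<in> F" and h: "\<forall>i\<in>Basis. real_of_int (k i) * \<delta> \<le> x \<bullet> i \<and> x \<bullet> i \<le> (real_of_int (k i) + 1) * \<delta>"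
    for k :: "'a \<Rightarrow> int" and i x :: 'a
  proof -
    have "norm x \<le> M" using M x by blast
    then have n: "\<bar>x \<bullet> i\<bar> \<le> M" using Basis_le_norm[OF i, of x] by linarith
    have 1: "real_of_int (k i) * \<delta> \<le> M" using h i n by fastforce
    have 2: "-M \<le> (real_of_int (k i) + 1) * \<delta>" using h i n by fastforce
    have "real_of_int (k i) \<le> M / \<delta>" using 1 assms(2) by (metis pos_le_divide_eq)
    then have a: "k i \<le> \<lfloor>M/\<delta>\<rfloor>" by linarith
    have "-M/\<delta> \<le> real_of_int (k i) + 1" using 2 assms(2) by (metis pos_divide_le_eq)
    then have b: "\<lceil>-M/\<delta>\<rceil> - 1 \<le> k i" by linarith
    show "k i \<in> B" using a b by (simp add: B_def)
  qed
  show ?thesis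
    by (rule finite_subset[OF _ fin]) (auto intro: key)
qed

lemma grid_count_lower:
  fixes F :: "'a::euclidean_space set"
  assumes "bounded F" "\<delta> > 0" "S \<subseteq> F" "finite S"
    and sep: "\<And>p q. p \<in> S \<Longrightarrow> q \<in> S \<Longrightarrow> p \<noteq> q \<Longrightarrow> \<exists>i\<in>Basis. \<bar>p \<bullet> i - q \<bullet> i\<bar> \<ge> \<delta>"
  shows "card S \<le> grid_count \<delta> F"
proof -
  define bx where "bx p = (\<lambda>i. if i \<in> Basis then \<lfloor>(p \<bullet> i)/\<delta>\<rfloor> else 0)" for p :: 'a
  have inj: "inj_on bx S"
  proof (rule inj_onI, rule ccontr)
    fix p q assume pq: "p \<in> S" "q \<in> S" "bx p = bx q" "p \<noteq> q"
    then obtain i where i: "i \<in> Basis" "\<bar>p \<bullet> i - q \<bullet> i\<bar> \<ge> \<delta>" using sep by blast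
    have "bx p i = bx q i" using pq(3) by simp
    then have "\<lfloor>(p \<bullet> i)/\<delta>\<rfloor> = \<lfloor>(q \<bullet> i)/\<delta>\<rfloor>" using i(1) by (simp add: bx_def)
    then have "\<bar>p \<bullet> i - q \<bullet> i\<bar> < \<delta>" using floor_eq_close assms(2) by blast
    then show False using i by linarith
  qed
  have sub: "bx ` S \<subseteq> {k :: 'a \<Rightarrow> int. (\<forall>i. i \<notin> Basis \<longrightarrow> k i = 0) \<and>
      (\<exists>x\<in>F. \<forall>i\<in>Basis. of_int (k i) * \<delta> \<le> x \<bullet> i \<and> x \<bullet> i \<le> (of_int (k i) + 1) * \<delta>)}"
  proof safe
    fix p assume p: "p \<in> S"
    show "\<And>i. i \<notin> Basis \<Longrightarrow> bx p i = 0" by (simp add: bx_def)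
    have "\<forall>i\<in>Basis. of_int (bx p i) * \<delta> \<le> p \<bullet> i \<and> p \<bullet> i \<le> (of_int (bx p i) + 1) * \<delta>"
    proof
      fix i :: 'a assume i: "i \<in> Basis"
      have e: "bx p i = \<lfloor>(p \<bullet> i)/\<delta>\<rfloor>" using i by (simp add: bx_def)
      have "of_int \<lfloor>(p \<bullet> i)/\<delta>\<rfloor> \<le> (p \<bullet> i)/\<delta>" by linarith
      then have 1: "of_int \<lfloor>(p \<bullet> i)/\<delta>\<rfloor> * \<delta> \<le> p \<bullet> i" using assms(2) by (metis pos_le_divide_eq)
      have "(p \<bullet> i)/\<delta> \<le> of_int \<lfloor>(p \<bullet> i)/\<delta>\<rfloor> + 1" by linarith
      then have 2: "p \<bullet> i \<le> (of_int \<lfloor>(p \<bullet> i)/\<delta>\<rfloor> + 1) * \<delta>" using assms(2) by (metis pos_divide_le_eq)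
      show "of_int (bx p i) * \<delta> \<le> p \<bullet> i \<and> p \<bullet> i \<le> (of_int (bx p i) + 1) * \<delta>" using 1 2 e by simp
    qed
    then show "\<exists>x\<in>F. \<forall>i\<in>Basis. of_int (bx p i) * \<delta> \<le> x \<bullet> i \<and> x \<bullet> i \<le> (of_int (bx p i) + 1) * \<delta>"
      using p assms(3) by blast
  qed
  show ?thesis unfolding grid_count_def
    using card_inj_on_le[OF inj sub grid_set_finite[OF assms(1,2)]] .
qed

lemma grid_count_X:
  fixes X :: "real set"
  assumes "grid_count \<delta> X > 0"
  obtains K :: "int set" where "finite K" "card K = grid_count \<delta> X"
    "\<And>j. j \<in> K \<Longrightarrow> \<exists>x\<in>X. of_int j * \<delta> \<le> x \<and> x \<le> (of_int j + 1) * \<delta>"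
proof -
  define G where "G = {k :: real \<Rightarrow> int. (\<forall>i. i \<notin> Basis \<longrightarrow> k i = 0) \<and>
      (\<exists>x\<in>X. \<forall>i\<in>Basis. of_int (k i) * \<delta> \<le> x \<bullet> i \<and> x \<bullet> i \<le> (of_int (k i) + 1) * \<delta>)}"
  have cG: "card G = grid_count \<delta> X" by (simp add: G_def grid_count_def)
  then have fG: "finite G" using assms card.infinite by fastforce
  have inj: "inj_on (\<lambda>k. k 1) G"
  proof (rule inj_onI)
    fix k k' assume "k \<in> G" "k' \<in> G" "k 1 = k' 1"
    note kk = this
    show "k = k'"
    proof (rule ext)
      fix i :: real
      show "k i = k' i"
      proof (cases "i = 1")
        case True then show ?thesis using kk(3) by simp
      next
        case False
        then have "i \<notin> Basis" by simp
        then show ?thesis using kk(1,2) unfolding G_def by simp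
      qed
    qed
  qed
  show ?thesis
  proof (rule that[of "(\<lambda>k. k 1) ` G"])
    show "finite ((\<lambda>k. k 1) ` G)" using fG by simp
    show "card ((\<lambda>k. k 1) ` G) = grid_count \<delta> X" using card_image[OF inj] cG by simp
    fix j assume "j \<in> (\<lambda>k. k 1) ` G"
    then show "\<exists>x\<in>X. of_int j * \<delta> \<le> x \<and> x \<le> (of_int j + 1) * \<delta>"
      unfolding G_def by auto
  qed
qed

lemma pigeonhole_real:
  assumes "finite J" "finite L" "L \<noteq> {}" "\<And>j. j \<in> J \<Longrightarrow> \<phi> j \<in> L"
  shows "\<exists>l\<in>L. real (card J) \<le> real (card L) * real (card {j\<in>J. \<phi> j = l})"
proof (rule ccontr)
  assume "\<not> ?thesis"
  then have lt: "\<And>l. l \<in> L \<Longrightarrow> real (card L) * real (card {j\<in>J. \<phi> j = l}) < real (card J)"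
    by (meson not_le)
  have "J = (\<Union>l\<in>L. {j\<in>J. \<phi> j = l})" using assms(4) by auto
  then have "card J = (\<Sum>l\<in>L. card {j\<in>J. \<phi> j = l})"
    using card_UN_disjoint[of L "\<lambda>l. {j\<in>J. \<phi> j = l}"] assms(1,2) by auto
  then have "real (card L) * real (card J) = (\<Sum>l\<in>L. real (card L) * real (card {j\<in>J. \<phi> j = l}))"
    by (simp add: sum_distrib_left)
  also have "\<dots> < (\<Sum>l\<in>L. real (card J))"
    using lt assms(2,3) by (intro sum_strict_mono) auto
  also have "\<dots> = real (card L) * real (card J)" by simp
  finally show False by simp
qed



definition lat :: "real \<Rightarrow> int \<Rightarrow> real set" where
  "lat e q = range (\<lambda>m::int. e/2 * of_int (4*m+q))"

lemma floor2_bounds: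
  assumes e: "(e::real) > 0"
  shows "e/2 * of_int \<lfloor>2*x/e\<rfloor> \<le> x" "x < e/2 * of_int \<lfloor>2*x/e\<rfloor> + e/2"
proof -
  define y where "y = 2*x/e"
  have yx: "x = e/2 * y" using e by (simp add: y_def)
  have n1: "of_int \<lfloor>y\<rfloor> \<le> y" "y < of_int \<lfloor>y\<rfloor> + 1" by linarith+
  have "e/2 * of_int \<lfloor>y\<rfloor> \<le> e/2 * y" using n1(1) e by (intro mult_left_mono) auto
  then show "e/2 * of_int \<lfloor>2*x/e\<rfloor> \<le> x" using yx unfolding y_def[symmetric] by linarith
  have "e/2 * y < e/2 * (of_int \<lfloor>y\<rfloor> + 1)" using n1(2) e by (intro mult_strict_left_mono) auto
  then show "x < e/2 * of_int \<lfloor>2*x/e\<rfloor> + e/2" using yx unfolding y_def[symmetric] by (simp add: algebra_simps)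
qed

lemma lat_infdist:
  assumes e: "e > 0" and n: "n = \<lfloor>2*x/e\<rfloor>" and q: "n mod 4 = q"
  shows "infdist x (lat e q) = x - e/2 * of_int n"
proof -
  have nq: "n = 4*(n div 4) + q" using q by presburger
  have mem: "e/2 * of_int n \<in> lat e q" unfolding lat_def
  proof (rule range_eqI[of _ _ "n div 4"])
    have "4*(n div 4) + q = n" using nq by linarith
    then show "e/2 * of_int n = e/2 * of_int (4*(n div 4)+q)" by simp
  qed
  have xe1: "e/2 * of_int n \<le> x" using floor2_bounds[OF e, of x] n by simp
  have xe2: "x < e/2 * of_int n + e/2" using floor2_bounds[OF e, of x] n by simp
  have le: "infdist x (lat e q) \<le> x - e/2 * of_int n"
    using infdist_le[OF mem, of x] xe1 by (simp add: dist_real_def)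
  have ne: "lat e q \<noteq> {}" by (simp add: lat_def)
  have ge: "x - e/2 * of_int n \<le> infdist x (lat e q)"
    unfolding infdist_notempty[OF ne]
  proof (rule cINF_greatest[OF ne])
    fix y assume "y \<in> lat e q"
    then have "y \<in> range (\<lambda>m::int. e/2 * of_int (4*m+q))" by (simp add: lat_def)
    then obtain m where y: "y = e/2 * of_int (4*m+q)" by blast
    show "x - e/2 * of_int n \<le> dist x y"
    proof (cases "4*m+q \<le> n")
      case True
      then have "of_int (4*m+q) \<le> (of_int n :: real)" by simp
      then have "e/2 * of_int (4*m+q) \<le> e/2 * of_int n" using e by (intro mult_left_mono) auto
      then have "y \<le> e/2 * of_int n" using y by simp
      then show ?thesis by (simp add: dist_real_def)
    next
      case False
      then have "4*m+q \<ge> n + 4" using q by presburger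
      then have "of_int (4*m+q) \<ge> of_int n + (4::real)" by linarith
      then have "e/2 * of_int (4*m+q) \<ge> e/2 * (of_int n + 4)" using e by (intro mult_left_mono) auto
      then have "y \<ge> e/2 * (of_int n + 4)" using y by simp
      then have "y - x \<ge> x - e/2 * of_int n" using xe2 e by (simp add: algebra_simps)
      then show ?thesis by (simp add: dist_real_def)
    qed
  qed
  show ?thesis using le ge by linarith
qed

lemma lat_bound:
  assumes e: "e > 0"
  shows "infdist x (lat e q) \<le> 2*e"
proof -
  define y where "y = 2*x/e"
  have yx: "x = e/2 * y" using e by (simp add: y_def)
  define z where "z = (y - of_int q)/4"
  have yz: "y = 4*z + of_int q" unfolding z_def by (simp add: field_simps)
  define m where "m = \<lfloor>z\<rfloor>"
  have m0: "of_int m \<le> z" "z < of_int m + 1"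
    unfolding m_def by linarith+
  have m1: "4 * of_int m + of_int q \<le> y" "y < 4 * of_int m + of_int q + 4"
    using m0 yz by linarith+
  have mem: "e/2 * of_int (4*m+q) \<in> lat e q" unfolding lat_def by (rule rangeI)
  have a: "e/2 * (4 * of_int m + of_int q) \<le> e/2 * y" using m1(1) e by (intro mult_left_mono) auto
  have b: "e/2 * y < e/2 * (4 * of_int m + of_int q + 4)" using m1(2) e by (intro mult_strict_left_mono) auto
  have "dist x (e/2 * of_int (4*m+q)) = \<bar>e/2 * y - e/2 * (4 * of_int m + of_int q)\<bar>"
    using yx by (simp add: dist_real_def)
  also have "\<dots> \<le> 2*e" using a b by (simp add: algebra_simps)
  finally have "dist x (e/2 * of_int (4*m+q)) \<le> 2*e" .
  then show ?thesis using infdist_le2[OF mem] by blast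
qed



lemma sep_pair:
  assumes e: "(e::real) > 0" and m: "\<lfloor>2*x/e\<rfloor> mod 4 = q" "\<lfloor>2*x'/e\<rfloor> mod 4 = q"
  shows "e < \<bar>x - x'\<bar> \<or> \<bar>infdist x (lat e q) - infdist x' (lat e q)\<bar> = \<bar>x - x'\<bar>"
proof (cases "\<lfloor>2*x/e\<rfloor> = \<lfloor>2*x'/e\<rfloor>")
  case True
  have "infdist x (lat e q) = x - e/2 * of_int \<lfloor>2*x/e\<rfloor>" using lat_infdist[OF e refl m(1)] .
  moreover have "infdist x' (lat e q) = x' - e/2 * of_int \<lfloor>2*x/e\<rfloor>" using lat_infdist[OF e refl m(2)] True by simp
  ultimately show ?thesis by simp
next
  case False
  let ?n = "\<lfloor>2*x/e\<rfloor>" and ?n' = "\<lfloor>2*x'/e\<rfloor>"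
  have "?n' \<ge> ?n + 4 \<or> ?n \<ge> ?n' + 4" using False m by presburger
  then show ?thesis
  proof
    assume h: "?n' \<ge> ?n + 4"
    then have "of_int ?n' \<ge> of_int ?n + (4::real)" by linarith
    then have "e/2 * of_int ?n' \<ge> e/2 * (of_int ?n + 4)" using e by (intro mult_left_mono) auto
    then show ?thesis using floor2_bounds[OF e, of x] floor2_bounds[OF e, of x'] e
      by (simp add: algebra_simps)
  next
    assume h: "?n \<ge> ?n' + 4"
    then have "of_int ?n \<ge> of_int ?n' + (4::real)" by linarith
    then have "e/2 * of_int ?n \<ge> e/2 * (of_int ?n' + 4)" using e by (intro mult_left_mono) auto
    then show ?thesis using floor2_bounds[OF e, of x] floor2_bounds[OF e, of x'] e
      by (simp add: algebra_simps)
  qed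
qed

lemma step_exists:
  fixes X :: "real set" and b L e eta :: real
  assumes L: "L \<ge> 0" and e: "0 < e" "e \<le> 1" and eta: "eta > 0" and b: "b > 0"
    and freq: "\<forall>\<gamma>>0. \<exists>\<delta>>0. \<delta> < \<gamma> \<and> \<delta> powr (-b) < real (grid_count \<delta> X)"
  shows "\<exists>\<delta> \<epsilon> q. 0<\<delta> \<and> 0<\<epsilon> \<and> \<epsilon> \<le> e/2 \<and> (L + \<epsilon>/\<delta>)*(2*\<epsilon>) \<le> e/8 \<and>
     2*b - eta \<le> ln (\<delta> powr (-b)/12) / (- ln \<epsilon>) \<and>
     (\<exists>S. finite S \<and> S \<subseteq> X \<and> \<delta> powr (-b)/12 \<le> real (card S) \<and>
        (\<forall>x\<in>S. \<forall>x'\<in>S. x \<noteq> x' \<longrightarrow> \<epsilon> < \<bar>x - x'\<bar> \<or>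
            (2*\<delta> \<le> \<bar>x - x'\<bar> \<and> \<bar>infdist x (lat \<epsilon> q) - infdist x' (lat \<epsilon> q)\<bar> = \<bar>x - x'\<bar>)))"
proof -
  define C where "C = sqrt (e/32)"
  have C0: "C > 0" using e by (simp add: C_def)
  have CC: "C*C = e/32" using e by (simp add: C_def)
  have C1: "C < 1" using e by (simp add: C_def)
  define lC where "lC = ln C"
  have lC0: "lC < 0" using C0 C1 by (simp add: lC_def)
  define R where "R = ln 12 + \<bar>2*b - eta\<bar> * \<bar>lC\<bar>"
  define T where "T = 2*R/eta + 1"
  define A where "A = e/(32*(L+1)*C)"
  have A0: "A > 0" using e L C0 by (simp add: A_def)
  define \<gamma> where "\<gamma> = min 1 (min (A^2) (exp (-T)))"
  have "\<gamma> > 0" using A0 by (simp add: \<gamma>_def)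
  then obtain \<delta> where d0: "\<delta> > 0" and dg: "\<delta> < \<gamma>" and Nbig: "\<delta> powr (-b) < real (grid_count \<delta> X)"
    using freq by blast
  define \<epsilon> where "\<epsilon> = C * sqrt \<delta>"
  have eps0: "\<epsilon> > 0" using C0 d0 by (simp add: \<epsilon>_def)
  have "sqrt \<delta> < sqrt (A^2)" using dg by (intro real_sqrt_less_mono) (simp add: \<gamma>_def)
  then have sA: "sqrt \<delta> < A" using A0 by simp
  have epsA: "\<epsilon> < e/(32*(L+1))"
  proof -
    have "\<epsilon> < C * A" unfolding \<epsilon>_def using sA C0 by simp
    also have "C * A = e/(32*(L+1))" using C0 by (simp add: A_def)
    finally show ?thesis .
  qed
  have "e/(32*(L+1)) \<le> e/2" using e L by (intro divide_left_mono) auto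
  then have eps_le: "\<epsilon> \<le> e/2" using epsA by linarith
  have sq: "\<epsilon>*\<epsilon> = C*C*\<delta>" using d0 by (simp add: \<epsilon>_def algebra_simps)
  have amp: "(L + \<epsilon>/\<delta>)*(2*\<epsilon>) \<le> e/8"
  proof -
    have "(L + \<epsilon>/\<delta>)*(2*\<epsilon>) = 2*L*\<epsilon> + 2*(\<epsilon>*\<epsilon>)/\<delta>" by (simp add: algebra_simps)
    also have "2*(\<epsilon>*\<epsilon>)/\<delta> = e/16"
    proof -
      have "(\<epsilon>*\<epsilon>)/\<delta> = C*C" using sq d0 by simp
      then show ?thesis using CC by (simp add: field_simps)
    qed
    also have "2*L*\<epsilon> \<le> 2*L*(e/(32*(L+1)))" using epsA L by (intro mult_left_mono) auto
    also have "2*L*(e/(32*(L+1))) = (e/16) * (L/(L+1))" using L by (simp add: field_simps)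
    also have "\<dots> \<le> e/16"
    proof -
      have "L/(L+1) \<le> 1" using L by simp
      then show ?thesis using mult_left_le[of "L/(L+1)" "e/16"] e by linarith
    qed
    finally show ?thesis by simp
  qed
  define t where "t = - ln \<delta>"
  have "\<delta> < exp (-T)" using dg by (simp add: \<gamma>_def)
  then have "ln \<delta> < ln (exp (-T))" using d0 by (subst ln_less_cancel_iff) auto
  then have "ln \<delta> < -T" by simp
  then have tT: "t > T" by (simp add: t_def)
  have num: "ln (\<delta> powr (-b)/12) = b*t - ln 12"
    using d0 by (simp add: ln_div ln_powr t_def)
  have den: "- ln \<epsilon> = t/2 - lC"
    using d0 C0 by (simp add: \<epsilon>_def ln_mult ln_sqrt t_def lC_def)
  have R0: "R \<ge> 0" by (simp add: R_def)
  have "2*R/eta \<ge> 0" using R0 eta by simp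
  then have T0: "T > 0" by (simp add: T_def)
  have Dpos: "t/2 - lC > 0" using tT T0 lC0 by linarith
  have ratio: "2*b - eta \<le> ln (\<delta> powr (-b)/12) / (- ln \<epsilon>)"
  proof -
    have "eta * T = 2*R + eta" using eta by (simp add: T_def field_simps)
    moreover have "eta * T < eta * t" using tT eta by simp
    ultimately have et: "eta * t > 2*R" using eta by linarith
    have "- ((2*b - eta) * lC) \<le> \<bar>2*b - eta\<bar> * \<bar>lC\<bar>"
      by (rule order.trans[OF abs_ge_minus_self], simp only: abs_mult order.refl)
    then have "ln 12 - (2*b - eta) * lC \<le> R" by (simp add: R_def)
    then have "(2*b - eta) * (t/2 - lC) \<le> b*t - ln 12" using et by (simp add: algebra_simps)
    then show ?thesis using Dpos by (simp add: num den le_divide_eq)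
  qed
  have Npos: "grid_count \<delta> X > 0"
  proof -
    have "0 < \<delta> powr (-b)" using d0 by simp
    then have "real (grid_count \<delta> X) > 0" using Nbig by linarith
    then show ?thesis by simp
  qed
  obtain K where fK: "finite K" and cK: "card K = grid_count \<delta> X"
    and Kx: "\<And>j. j \<in> K \<Longrightarrow> \<exists>x\<in>X. of_int j * \<delta> \<le> x \<and> x \<le> (of_int j + 1) * \<delta>"
    using grid_count_X[OF Npos] by blast
  define pt where "pt j = (SOME x. x \<in> X \<and> of_int j * \<delta> \<le> x \<and> x \<le> (of_int j + 1) * \<delta>)" for j :: int
  have pt: "pt j \<in> X \<and> of_int j * \<delta> \<le> pt j \<and> pt j \<le> (of_int j + 1) * \<delta>" if "j \<in> K" for j
  proof -
    have "\<exists>x. x \<in> X \<and> of_int j * \<delta> \<le> x \<and> x \<le> (of_int j + 1) * \<delta>" using Kx[OF that] by blast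
    then show ?thesis unfolding pt_def by (rule someI_ex)
  qed
  define lab where "lab j = (j mod 3, \<lfloor>2 * pt j / \<epsilon>\<rfloor> mod 4)" for j :: int
  define Lb where "Lb = {0..(2::int)} \<times> {0..(3::int)}"
  have cLb: "card Lb = 12" by (simp add: Lb_def)
  have labin: "lab j \<in> Lb" for j
  proof -
    have "0 \<le> j mod 3" "j mod 3 < 3" "0 \<le> \<lfloor>2*pt j/\<epsilon>\<rfloor> mod 4" "\<lfloor>2*pt j/\<epsilon>\<rfloor> mod 4 < 4" by simp_all
    then show ?thesis unfolding lab_def Lb_def by (simp only: mem_Times_iff atLeastAtMost_iff fst_conv snd_conv) (intro conjI TrueI; linarith)
  qed
  have "\<exists>l\<in>Lb. real (card K) \<le> real (card Lb) * real (card {j\<in>K. lab j = l})"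
    by (rule pigeonhole_real[OF fK]) (simp_all add: Lb_def labin[unfolded Lb_def])
  then obtain rq where rq: "rq \<in> Lb" and pig: "real (card K) \<le> real (card Lb) * real (card {j\<in>K. lab j = rq})"
    by blast
  obtain r q where rqd: "rq = (r, q)" by fastforce
  define J where "J = {j\<in>K. lab j = rq}"
  have fJ: "finite J" using fK by (simp add: J_def)
  have far: "2*\<delta> \<le> \<bar>pt j - pt j'\<bar>" if "j \<in> J" "j' \<in> J" "j \<noteq> j'" for j j'
  proof -
    have jK: "j \<in> K" "j' \<in> K" and m3: "j mod 3 = j' mod 3" using that by (auto simp: J_def lab_def rqd)
    then have "j' \<ge> j + 3 \<or> j \<ge> j' + 3" using that(3) by presburger
    then show ?thesis
    proof
      assume "j' \<ge> j + 3"
      then have "of_int j' \<ge> of_int j + (3::real)" by linarith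
      then have "of_int j' * \<delta> \<ge> (of_int j + 3) * \<delta>" using d0 by (intro mult_right_mono) auto
      then show ?thesis using pt[OF jK(1)] pt[OF jK(2)] by (simp add: algebra_simps)
    next
      assume "j \<ge> j' + 3"
      then have "of_int j \<ge> of_int j' + (3::real)" by linarith
      then have "of_int j * \<delta> \<ge> (of_int j' + 3) * \<delta>" using d0 by (intro mult_right_mono) auto
      then show ?thesis using pt[OF jK(1)] pt[OF jK(2)] by (simp add: algebra_simps)
    qed
  qed
  have inj: "inj_on pt J"
  proof (rule inj_onI, rule ccontr)
    fix j j' assume "j \<in> J" "j' \<in> J" "pt j = pt j'" "j \<noteq> j'"
    then show False using far[of j j'] d0 by simp
  qed
  define S where "S = pt ` J"
  have cS: "card S = card J" using inj by (simp add: S_def card_image)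
  have SX: "S \<subseteq> X" using pt by (auto simp: S_def J_def)
  have "real (card K) \<le> 12 * real (card J)" using pig cLb by (simp add: J_def)
  then have cardS: "\<delta> powr (-b)/12 \<le> real (card S)"
    using Nbig cK cS by simp
  have pair: "\<forall>x\<in>S. \<forall>x'\<in>S. x \<noteq> x' \<longrightarrow> \<epsilon> < \<bar>x - x'\<bar> \<or>
            (2*\<delta> \<le> \<bar>x - x'\<bar> \<and> \<bar>infdist x (lat \<epsilon> q) - infdist x' (lat \<epsilon> q)\<bar> = \<bar>x - x'\<bar>)"
  proof (intro ballI impI)
    fix x x' assume "x \<in> S" "x' \<in> S" "x \<noteq> x'"
    note xs = this
    obtain j where j1: "j \<in> J" "x = pt j" using xs(1) unfolding S_def by blast
    obtain j' where j2: "j' \<in> J" "x' = pt j'" using xs(2) unfolding S_def by blast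
    have jj: "j \<in> J" "j' \<in> J" "x = pt j" "x' = pt j'" "j \<noteq> j'" using j1 j2 xs(3) by auto
    have "lab j = (r,q)" using j1(1) by (simp add: J_def rqd)
    then have mq1: "\<lfloor>2*x/\<epsilon>\<rfloor> mod 4 = q" using j1(2) by (simp add: lab_def)
    have "lab j' = (r,q)" using j2(1) by (simp add: J_def rqd)
    then have mq2: "\<lfloor>2*x'/\<epsilon>\<rfloor> mod 4 = q" using j2(2) by (simp add: lab_def)
    note mq = mq1 mq2
    show "\<epsilon> < \<bar>x - x'\<bar> \<or> (2*\<delta> \<le> \<bar>x - x'\<bar> \<and> \<bar>infdist x (lat \<epsilon> q) - infdist x' (lat \<epsilon> q)\<bar> = \<bar>x - x'\<bar>)"
      using sep_pair[OF eps0 mq] far[OF jj(1,2,5)] jj(3,4) by blast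
  qed
  have fS: "finite S" using fJ by (simp add: S_def)
  show ?thesis
    apply (rule exI[of _ \<delta>], rule exI[of _ \<epsilon>], rule exI[of _ q])
    apply (intro conjI d0 eps0 eps_le amp ratio)
    apply (rule exI[of _ S])
    apply (intro conjI fS SX cardS pair)
    done
qed



definition stepP :: "real set \<Rightarrow> real \<Rightarrow> nat \<Rightarrow> real \<Rightarrow> real \<Rightarrow> real \<Rightarrow> real \<Rightarrow> int \<Rightarrow> bool" where
  "stepP X b k L e \<delta> \<epsilon> q \<longleftrightarrow> 0<\<delta> \<and> 0<\<epsilon> \<and> \<epsilon> \<le> e/2 \<and> (L + \<epsilon>/\<delta>)*(2*\<epsilon>) \<le> e/8 \<and>
     2*b - 1/(real k + 1) \<le> ln (\<delta> powr (-b)/12) / (- ln \<epsilon>) \<and>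
     (\<exists>S. finite S \<and> S \<subseteq> X \<and> \<delta> powr (-b)/12 \<le> real (card S) \<and>
        (\<forall>x\<in>S. \<forall>x'\<in>S. x \<noteq> x' \<longrightarrow> \<epsilon> < \<bar>x - x'\<bar> \<or>
            (2*\<delta> \<le> \<bar>x - x'\<bar> \<and> \<bar>infdist x (lat \<epsilon> q) - infdist x' (lat \<epsilon> q)\<bar> = \<bar>x - x'\<bar>)))"

definition stepF :: "real set \<Rightarrow> real \<Rightarrow> nat \<Rightarrow> real \<Rightarrow> real \<Rightarrow> real \<times> real \<times> int" where
  "stepF X b k L e = (SOME t. stepP X b k L e (fst t) (fst (snd t)) (snd (snd t)))"

fun seqS :: "real set \<Rightarrow> real \<Rightarrow> nat \<Rightarrow> (real \<times> real \<times> int) \<times> real \<times> real" where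
  "seqS X b 0 = (stepF X b 0 0 1, 0, 1)"
| "seqS X b (Suc k) = (stepF X b (Suc k) (fst (snd (seqS X b k)) + (fst (snd (seqS X b k)) + fst (snd (fst (seqS X b k))) / fst (fst (seqS X b k))))
       (fst (snd (fst (seqS X b k)))),
     fst (snd (seqS X b k)) + (fst (snd (seqS X b k)) + fst (snd (fst (seqS X b k))) / fst (fst (seqS X b k))),
     fst (snd (fst (seqS X b k))))"

lemma stepF_good:
  assumes "L \<ge> 0" "0 < e" "e \<le> 1" "b > 0"
    and freq: "\<forall>\<gamma>>0. \<exists>\<delta>>0. \<delta> < \<gamma> \<and> \<delta> powr (-b) < real (grid_count \<delta> X)"
  shows "stepP X b k L e (fst (stepF X b k L e)) (fst (snd (stepF X b k L e))) (snd (snd (stepF X b k L e)))"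
proof -
  have "\<exists>\<delta> \<epsilon> q. stepP X b k L e \<delta> \<epsilon> q"
    unfolding stepP_def using step_exists[OF assms(1,2,3) _ assms(4) freq, of "1/(real k + 1)"] by simp
  then have "\<exists>t. stepP X b k L e (fst t) (fst (snd t)) (snd (snd t))" by auto
  then show ?thesis unfolding stepF_def by (rule someI_ex)
qed

lemma seq_good:
  assumes "b > 0"
    and freq: "\<forall>\<gamma>>0. \<exists>\<delta>>0. \<delta> < \<gamma> \<and> \<delta> powr (-b) < real (grid_count \<delta> X)"
  shows "0 \<le> fst (snd (seqS X b k)) \<and> 0 < snd (snd (seqS X b k)) \<and> snd (snd (seqS X b k)) \<le> 1 \<and>
    stepP X b k (fst (snd (seqS X b k))) (snd (snd (seqS X b k)))
      (fst (fst (seqS X b k))) (fst (snd (fst (seqS X b k)))) (snd (snd (fst (seqS X b k))))"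
proof (induction k)
  case 0
  show ?case using stepF_good[of 0 1 b X 0] assms by simp
next
  case (Suc k)
  let ?s = "seqS X b k"
  have IH: "0 \<le> fst (snd ?s)" "0 < snd (snd ?s)" "snd (snd ?s) \<le> 1"
    "stepP X b k (fst (snd ?s)) (snd (snd ?s)) (fst (fst ?s)) (fst (snd (fst ?s))) (snd (snd (fst ?s)))"
    using Suc by auto
  have d: "0 < fst (fst ?s)" "0 < fst (snd (fst ?s))" "fst (snd (fst ?s)) \<le> snd (snd ?s) / 2"
    using IH(4) unfolding stepP_def by auto
  have L': "0 \<le> fst (snd ?s) + (fst (snd ?s) + fst (snd (fst ?s)) / fst (fst ?s))" using IH(1) d by simp
  have e': "0 < fst (snd (fst ?s))" "fst (snd (fst ?s)) \<le> 1" using d IH(3) by auto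
  show ?case using stepF_good[OF L' e' assms] L' e' by simp
qed



lemma main_b:
  fixes X :: "real set" and b :: real
  assumes X01: "X \<subseteq> {0..1}" and b: "b > 0"
    and freq: "\<forall>\<gamma>>0. \<exists>\<delta>>0. \<delta> < \<gamma> \<and> \<delta> powr (-b) < real (grid_count \<delta> X)"
  shows "\<exists>f. uniformly_continuous_on X f \<and> ereal (2*b) \<le> upper_box_dim (graph_of X f)"
proof -
  define D where "D k = fst (fst (seqS X b k))" for k
  define E where "E k = fst (snd (fst (seqS X b k)))" for k
  define Q where "Q k = snd (snd (fst (seqS X b k)))" for k
  define L where "L k = fst (snd (seqS X b k))" for k
  define Ei where "Ei k = snd (snd (seqS X b k))" for k
  have good: "0 \<le> L k \<and> 0 < Ei k \<and> Ei k \<le> 1 \<and> stepP X b k (L k) (Ei k) (D k) (E k) (Q k)" for k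
    using seq_good[OF b freq, of k] unfolding D_def E_def Q_def L_def Ei_def .
  have L0: "L 0 = 0" and Ei0: "Ei 0 = 1" by (simp_all add: L_def Ei_def)
  have LS: "L (Suc k) = L k + (L k + E k / D k)" for k by (simp add: L_def E_def D_def)
  have EiS: "Ei (Suc k) = E k" for k by (simp add: Ei_def E_def)
  have Lnn: "0 \<le> L k" and Eipos: "0 < Ei k" and Eile1: "Ei k \<le> 1" for k using good[of k] by auto
  have Dpos: "0 < D k" and Epos: "0 < E k" and Ele: "E k \<le> Ei k / 2"
    and amp: "(L k + E k / D k) * (2 * E k) \<le> Ei k / 8"
    and rat: "2*b - 1/(real k+1) \<le> ln (D k powr (-b)/12) / (- ln (E k))"
    and Sex: "\<exists>S. finite S \<and> S \<subseteq> X \<and> D k powr (-b)/12 \<le> real (card S) \<and>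
        (\<forall>x\<in>S. \<forall>x'\<in>S. x \<noteq> x' \<longrightarrow> E k < \<bar>x - x'\<bar> \<or>
            (2*D k \<le> \<bar>x - x'\<bar> \<and> \<bar>infdist x (lat (E k) (Q k)) - infdist x' (lat (E k) (Q k))\<bar> = \<bar>x - x'\<bar>))"
    for k using good[of k] unfolding stepP_def by auto
  define lam where "lam k = L k + E k / D k" for k
  have lam0: "0 \<le> lam k" for k using Lnn[of k] Epos[of k] Dpos[of k] by (simp add: lam_def)
  have Lsum: "L k = (\<Sum>j<k. lam j)" for k
  proof (induction k)
    case 0 show ?case by (simp add: L0)
  next
    case (Suc k)
    have "L (Suc k) = L k + lam k" by (simp add: LS lam_def)
    then show ?case using Suc.IH by simp
  qed
  have Eigeo: "Ei k \<le> (1/2)^k" for k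
  proof (induction k)
    case 0 then show ?case by (simp add: Ei0)
  next
    case (Suc k)
    have "Ei (Suc k) \<le> Ei k / 2" using EiS[of k] Ele[of k] by simp
    also have "\<dots> \<le> (1/2)^k / 2" using Suc by simp
    finally show ?case by simp
  qed
  have Egeo: "E (j + k) \<le> E k * (1/2)^j" for j k
  proof (induction j)
    case 0 then show ?case by simp
  next
    case (Suc j)
    have "E (Suc j + k) \<le> Ei (Suc (j + k)) / 2" using Ele[of "Suc (j+k)"] by simp
    also have "\<dots> = E (j + k) / 2" by (simp add: EiS)
    also have "\<dots> \<le> E k * (1/2)^j / 2" using Suc by simp
    finally show ?case by simp
  qed
  have Elt1: "E k < 1" for k using Ele[of k] Eile1[of k] by linarith
  define g where "g k x = lam k * infdist x (lat (E k) (Q k))" for k x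
  have g0: "0 \<le> g k x" for k x using lam0[of k] by (simp add: g_def infdist_nonneg)
  have gle: "g k x \<le> Ei k / 8" for k x
  proof -
    have "g k x \<le> lam k * (2 * E k)" unfolding g_def
      using lam0[of k] lat_bound[OF Epos[of k], of x "Q k"] by (intro mult_left_mono) auto
    also have "\<dots> \<le> Ei k / 8" using amp[of k] by (simp add: lam_def)
    finally show ?thesis .
  qed
  have gle2: "g k x \<le> (1/2)^k" for k x
    using gle[of k x] Eigeo[of k] Eipos[of k] by linarith
  have gLip: "\<bar>g k x - g k y\<bar> \<le> lam k * \<bar>x - y\<bar>" for k x y
  proof -
    have "\<bar>g k x - g k y\<bar> = lam k * \<bar>infdist x (lat (E k) (Q k)) - infdist y (lat (E k) (Q k))\<bar>"
      using lam0[of k] by (simp add: g_def abs_mult right_diff_distrib[symmetric])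
    also have "\<dots> \<le> lam k * \<bar>x - y\<bar>"
      using lam0[of k] infdist_triangle_abs[of x "lat (E k) (Q k)" y]
      by (intro mult_left_mono) (auto simp: dist_real_def)
    finally show ?thesis .
  qed
  have geo: "summable (\<lambda>k. (1/2::real)^k)" by (rule summable_geometric) simp
  have geosum: "(\<Sum>k. (1/2::real)^k) = 2" using suminf_geometric[of "1/2::real"] by simp
  have summ: "summable (\<lambda>k. g k x)" for x
    by (rule summable_comparison_test'[OF geo, of 0]) (use g0 gle2 in auto)
  have summT: "summable (\<lambda>j. g (j + m) x)" for m x
    using summable_ignore_initial_segment[OF summ[of x], of m] .
  define f where "f x = (\<Sum>k. g k x)" for x
  have split: "f x = (\<Sum>j. g (j + m) x) + (\<Sum>j<m. g j x)" for x m
    unfolding f_def by (rule suminf_split_initial_segment[OF summ])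
  have tail_nn: "0 \<le> (\<Sum>j. g (j + m) x)" for m x
    by (rule suminf_nonneg[OF summT]) (use g0 in auto)
  have tail_geo: "(\<Sum>j. g (j + m) x) \<le> 2 * (1/2)^m" for m x
  proof -
    have "(\<Sum>j. g (j + m) x) \<le> (\<Sum>j. (1/2)^m * (1/2::real)^j)"
    proof (rule suminf_le[OF _ summT summable_mult[OF geo]])
      fix j show "g (j + m) x \<le> (1/2)^m * (1/2)^j" using gle2[of "j+m" x] by (simp add: power_add mult.commute)
    qed
    also have "\<dots> = (1/2)^m * 2" using suminf_mult[OF geo, of "(1/2)^m"] geosum by simp
    finally show ?thesis by simp
  qed
  have tail_E: "(\<Sum>j. g (j + Suc k) x) \<le> E k / 4" for k x
  proof -
    have "(\<Sum>j. g (j + Suc k) x) \<le> (\<Sum>j. E k / 8 * (1/2::real)^j)"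
    proof (rule suminf_le[OF _ summT summable_mult[OF geo]])
      fix j
      have "g (j + Suc k) x \<le> Ei (Suc (j + k)) / 8" using gle[of "j + Suc k" x] by simp
      also have "\<dots> = E (j + k) / 8" by (simp add: EiS)
      also have "\<dots> \<le> E k * (1/2)^j / 8" using Egeo[of j k] by simp
      finally show "g (j + Suc k) x \<le> E k / 8 * (1/2)^j" by simp
    qed
    also have "\<dots> = E k / 8 * 2" using suminf_mult[OF geo, of "E k / 8"] geosum by simp
    finally show ?thesis by simp
  qed
  have sumdiff: "\<bar>(\<Sum>j<m. g j x) - (\<Sum>j<m. g j y)\<bar> \<le> L m * \<bar>x - y\<bar>" for m x y
  proof -
    have "\<bar>(\<Sum>j<m. g j x) - (\<Sum>j<m. g j y)\<bar> = \<bar>\<Sum>j<m. g j x - g j y\<bar>"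
      by (simp add: sum_subtractf)
    also have "\<dots> \<le> (\<Sum>j<m. \<bar>g j x - g j y\<bar>)" by (rule sum_abs)
    also have "\<dots> \<le> (\<Sum>j<m. lam j * \<bar>x - y\<bar>)" by (rule sum_mono) (rule gLip)
    also have "\<dots> = L m * \<bar>x - y\<bar>" by (simp add: Lsum sum_distrib_right)
    finally show ?thesis .
  qed
  have fbound: "0 \<le> f x \<and> f x \<le> 2" for x
  proof
    show "0 \<le> f x" unfolding f_def by (rule suminf_nonneg[OF summ]) (use g0 in auto)
    have "f x \<le> (\<Sum>k. (1/2::real)^k)" unfolding f_def
      by (rule suminf_le[OF _ summ geo]) (use gle2 in auto)
    then show "f x \<le> 2" using geosum by simp
  qed
  have uc: "uniformly_continuous_on X f"
    unfolding uniformly_continuous_on_def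
  proof (intro allI impI)
    fix e :: real assume e: "0 < e"
    obtain K where K: "(1/2::real)^K < e/8" using real_arch_pow_inv[of "e/8" "1/2"] e by auto
    define d where "d = e / (2 * (L K + 1))"
    have d: "d > 0" using e Lnn[of K] by (simp add: d_def)
    have Ld: "L K * d \<le> e/2"
    proof -
      have "L K * d = (e/2) * (L K / (L K + 1))" using Lnn[of K] by (simp add: d_def field_simps)
      also have "\<dots> \<le> e/2"
      proof -
        have "L K / (L K + 1) \<le> 1" using Lnn[of K] by simp
        then show ?thesis using mult_left_le[of "L K / (L K + 1)" "e/2"] e by linarith
      qed
      finally show ?thesis .
    qed
    show "\<exists>d>0. \<forall>x\<in>X. \<forall>x'\<in>X. dist x' x < d \<longrightarrow> dist (f x') (f x) < e"
    proof (intro exI[of _ d] conjI ballI impI d)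
      fix x x' :: real assume xx: "dist x' x < d"
      have t1: "\<bar>(\<Sum>j. g (j + K) x') - (\<Sum>j. g (j + K) x)\<bar> \<le> 2 * (1/2)^K"
        using tail_nn[of K x] tail_nn[of K x'] tail_geo[of K x] tail_geo[of K x'] by linarith
      have t2: "\<bar>(\<Sum>j<K. g j x') - (\<Sum>j<K. g j x)\<bar> \<le> L K * \<bar>x' - x\<bar>" by (rule sumdiff)
      have "L K * \<bar>x' - x\<bar> \<le> L K * d" using xx Lnn[of K] by (intro mult_left_mono) (auto simp: dist_real_def)
      then have t3: "L K * \<bar>x' - x\<bar> \<le> e/2" using Ld by linarith
      have "\<bar>f x' - f x\<bar> \<le> \<bar>(\<Sum>j. g (j + K) x') - (\<Sum>j. g (j + K) x)\<bar> + \<bar>(\<Sum>j<K. g j x') - (\<Sum>j<K. g j x)\<bar>"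
        unfolding split[of x' K] split[of x K] by linarith
      then show "dist (f x') (f x) < e" using t1 t2 t3 K by (simp add: dist_real_def)
    qed
  qed
  have fsep: "E k \<le> \<bar>f x - f x'\<bar>" if "2*D k \<le> \<bar>x - x'\<bar>"
    "\<bar>infdist x (lat (E k) (Q k)) - infdist x' (lat (E k) (Q k))\<bar> = \<bar>x - x'\<bar>" for k x x'
  proof -
    define d0 where "d0 = \<bar>x - x'\<bar>"
    have gk: "\<bar>g k x - g k x'\<bar> = lam k * d0"
      using that(2) lam0[of k] by (simp add: g_def d0_def abs_mult right_diff_distrib[symmetric])
    have P: "\<bar>(\<Sum>j<k. g j x) - (\<Sum>j<k. g j x')\<bar> \<le> L k * d0" unfolding d0_def by (rule sumdiff)
    have T: "\<bar>(\<Sum>j. g (j + Suc k) x) - (\<Sum>j. g (j + Suc k) x')\<bar> \<le> E k / 4"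
      using tail_nn[of "Suc k" x] tail_nn[of "Suc k" x'] tail_E[of k x] tail_E[of k x'] by linarith
    have fx: "f x = (\<Sum>j. g (j + Suc k) x) + (\<Sum>j<k. g j x) + g k x" for x
      using split[of x "Suc k"] by simp
    have lk: "lam k * d0 - L k * d0 = (E k / D k) * d0" by (simp add: lam_def algebra_simps)
    have "(E k / D k) * (2 * D k) \<le> (E k / D k) * d0"
      using that(1) Epos[of k] Dpos[of k] by (intro mult_left_mono) (auto simp: d0_def)
    then have big: "2 * E k \<le> (E k / D k) * d0" using Dpos[of k] by simp
    have "lam k * d0 - L k * d0 - E k / 4 \<le> \<bar>f x - f x'\<bar>"
      unfolding fx[of x] fx[of x'] using gk P T by linarith
    then show ?thesis using lk big Epos[of k] by linarith
  qed
  have bddG: "bounded (graph_of X f)"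
  proof (rule bounded_subset[OF bounded_Times[OF bounded_closed_interval bounded_closed_interval]])
    show "graph_of X f \<subseteq> {0..1::real} \<times> {0..2::real}"
      using X01 fbound by (auto simp: graph_of_def)
  qed
  have cnt: "D k powr (-b)/12 \<le> real (grid_count (E k) (graph_of X f))" for k
  proof -
    obtain S where S: "finite S" "S \<subseteq> X" "D k powr (-b)/12 \<le> real (card S)"
      and pair: "\<forall>x\<in>S. \<forall>x'\<in>S. x \<noteq> x' \<longrightarrow> E k < \<bar>x - x'\<bar> \<or>
            (2*D k \<le> \<bar>x - x'\<bar> \<and> \<bar>infdist x (lat (E k) (Q k)) - infdist x' (lat (E k) (Q k))\<bar> = \<bar>x - x'\<bar>)"
      using Sex[of k] by blast
    define G where "G = (\<lambda>x. (x, f x)) ` S"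
    have inj: "inj_on (\<lambda>x. (x, f x)) S" by (rule inj_onI) simp
    have cG: "card G = card S" unfolding G_def using card_image[OF inj] .
    have GF: "G \<subseteq> graph_of X f" using S(2) by (auto simp: G_def graph_of_def)
    have fG: "finite G" using S(1) by (simp add: G_def)
    have b1: "(1::real, 0::real) \<in> Basis" and b2: "(0::real, 1::real) \<in> Basis" by (simp_all add: Basis_prod_def)
    have sepG: "\<exists>i\<in>Basis. E k \<le> \<bar>p \<bullet> i - q \<bullet> i\<bar>" if pG: "p \<in> G" and qG: "q \<in> G" and pq: "p \<noteq> q" for p q
    proof -
      obtain x where x: "x \<in> S" "p = (x, f x)" using pG unfolding G_def by blast
      obtain x' where x': "x' \<in> S" "q = (x', f x')" using qG unfolding G_def by blast
      have "x \<noteq> x'" using x x' pq by auto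
      then have "E k < \<bar>x - x'\<bar> \<or>
            (2*D k \<le> \<bar>x - x'\<bar> \<and> \<bar>infdist x (lat (E k) (Q k)) - infdist x' (lat (E k) (Q k))\<bar> = \<bar>x - x'\<bar>)"
        using pair x(1) x'(1) by blast
      then show ?thesis
      proof
        assume "E k < \<bar>x - x'\<bar>"
        then have "E k \<le> \<bar>p \<bullet> (1,0) - q \<bullet> (1,0)\<bar>" using x x' by simp
        then show ?thesis using b1 by blast
      next
        assume h: "2*D k \<le> \<bar>x - x'\<bar> \<and> \<bar>infdist x (lat (E k) (Q k)) - infdist x' (lat (E k) (Q k))\<bar> = \<bar>x - x'\<bar>"
        have "E k \<le> \<bar>f x - f x'\<bar>" using fsep[of k x x'] h by blast
        then have "E k \<le> \<bar>p \<bullet> (0,1) - q \<bullet> (0,1)\<bar>" using x x' by simp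
        then show ?thesis using b2 by blast
      qed
    qed
    have "card G \<le> grid_count (E k) (graph_of X f)"
      by (rule grid_count_lower[OF bddG Epos GF fG sepG])
    then show ?thesis using S(3) cG by linarith
  qed
  have hk: "2*b - 1/(real k+1) \<le> ln (real (grid_count (E k) (graph_of X f))) / (- ln (E k))" for k
  proof -
    have p0: "0 < D k powr (-b)/12" using Dpos[of k] by simp
    have "ln (D k powr (-b)/12) \<le> ln (real (grid_count (E k) (graph_of X f)))"
    proof -
      have gp: "0 < real (grid_count (E k) (graph_of X f))" using cnt[of k] p0 by linarith
      show ?thesis using ln_le_cancel_iff[OF p0 gp] cnt[of k] by blast
    qed
    moreover have "- ln (E k) > 0" using Epos[of k] Elt1[of k] by simp
    ultimately have "ln (D k powr (-b)/12) / (- ln (E k)) \<le> ln (real (grid_count (E k) (graph_of X f))) / (- ln (E k))"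
      by (intro divide_right_mono) auto
    then show ?thesis using rat[of k] by linarith
  qed
  have dim: "ereal (2*b) \<le> upper_box_dim (graph_of X f)"
  proof (rule ccontr)
    assume "\<not> ?thesis"
    then have lt: "upper_box_dim (graph_of X f) < ereal (2*b)" by simp
    obtain z where z: "upper_box_dim (graph_of X f) < z" "z < ereal (2*b)" using dense[OF lt] by blast
    have ev: "eventually (\<lambda>\<delta>. ereal (ln (real (grid_count \<delta> (graph_of X f))) / - ln \<delta>) < z) (at_right 0)"
      using Limsup_lessD[OF z(1)[unfolded upper_box_dim_def]] .
    then obtain \<gamma> where g0: "\<gamma> > 0" and gam: "\<And>y. y > 0 \<Longrightarrow> y < \<gamma> \<Longrightarrow> ereal (ln (real (grid_count y (graph_of X f))) / - ln y) < z"
      unfolding eventually_at_right_field by auto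
    obtain c where c: "z = ereal c" using z by (cases z) auto
    have c2: "c < 2*b" using z(2) c by simp
    obtain k1 where k1: "(1/2::real)^k1 < \<gamma>" using real_arch_pow_inv[of \<gamma> "1/2"] g0 by auto
    obtain k2 where k2: "inverse (real (Suc k2)) < 2*b - c" using reals_Archimedean[of "2*b - c"] c2 by auto
    define k where "k = k1 + k2"
    have "E k \<le> (1/2)^k" using Ele[of k] Eigeo[of k] Eipos[of k] by linarith
    also have "\<dots> \<le> (1/2)^k1" unfolding k_def by (rule power_decreasing) auto
    finally have Eg: "E k < \<gamma>" using k1 by linarith
    have "1/(real k + 1) \<le> inverse (real (Suc k2))"
      unfolding k_def by (simp add: inverse_eq_divide divide_left_mono)
    then have ck: "c < 2*b - 1/(real k + 1)" using k2 by linarith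
    have "ereal (ln (real (grid_count (E k) (graph_of X f))) / - ln (E k)) < ereal c"
      using gam[OF Epos[of k] Eg] c by simp
    then have "ln (real (grid_count (E k) (graph_of X f))) / - ln (E k) < c" by simp
    then show False using hk[of k] ck by linarith
  qed
  show ?thesis using uc dim by blast
qed



lemma box_dim_nonneg: "0 \<le> upper_box_dim (F :: 'a::euclidean_space set)"
  unfolding upper_box_dim_def
proof (rule le_Limsup)
  show "at_right (0::real) \<noteq> bot" by simp
  show "\<forall>\<^sub>F \<delta> in at_right 0. 0 \<le> ereal (ln (real (grid_count \<delta> F)) / - ln \<delta>)"
    using eventually_at_right_real[OF zero_less_one]
  proof (rule eventually_mono)
    fix \<delta> :: real assume d: "\<delta> \<in> {0<..<1}"
    have "0 \<le> ln (real (grid_count \<delta> F))"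
      by (cases "grid_count \<delta> F = 0") auto
    moreover have "0 < - ln \<delta>" using d by simp
    ultimately have "0 \<le> ln (real (grid_count \<delta> F)) / (- ln \<delta>)" by (rule divide_nonneg_pos)
    then show "0 \<le> ereal (ln (real (grid_count \<delta> F)) / - ln \<delta>)" by simp
  qed
qed

lemma freq_of:
  fixes X :: "real set"
  assumes b: "b > 0" and lt: "ereal b < upper_box_dim X"
  shows "\<forall>\<gamma>>0. \<exists>\<delta>>0. \<delta> < \<gamma> \<and> \<delta> powr (-b) < real (grid_count \<delta> X)"
proof (rule ccontr)
  assume "\<not> ?thesis"
  then have "\<exists>\<gamma>>0. \<forall>\<delta>>0. \<delta> < \<gamma> \<longrightarrow> real (grid_count \<delta> X) \<le> \<delta> powr (-b)"
    by (meson not_less)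
  then obtain \<gamma> where g: "\<gamma> > 0" and small: "\<And>\<delta>. \<delta> > 0 \<Longrightarrow> \<delta> < \<gamma> \<Longrightarrow> real (grid_count \<delta> X) \<le> \<delta> powr (-b)"
    by blast
  have mg: "(0::real) < min \<gamma> 1" using g by simp
  have "\<forall>\<^sub>F \<delta> in at_right 0. ereal (ln (real (grid_count \<delta> X)) / - ln \<delta>) \<le> ereal b"
    using eventually_at_right_real[OF mg]
  proof (rule eventually_mono)
    fix \<delta> :: real assume d: "\<delta> \<in> {0<..<min \<gamma> 1}"
    have dl: "0 < - ln \<delta>" using d by simp
    have "ln (real (grid_count \<delta> X)) / - ln \<delta> \<le> b"
    proof (cases "grid_count \<delta> X = 0")
      case True then show ?thesis using b by simp
    next
      case False
      then have p: "0 < real (grid_count \<delta> X)" by simp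
      have "ln (real (grid_count \<delta> X)) \<le> ln (\<delta> powr (-b))"
        using small[of \<delta>] d p by (subst ln_le_cancel_iff) auto
      also have "\<dots> = b * (- ln \<delta>)" using d by (simp add: ln_powr)
      finally have h: "ln (real (grid_count \<delta> X)) \<le> b * (- ln \<delta>)" .
      show ?thesis using pos_divide_le_eq[OF dl] h by blast
    qed
    then show "ereal (ln (real (grid_count \<delta> X)) / - ln \<delta>) \<le> ereal b" by simp
  qed
  then have "upper_box_dim X \<le> ereal b" unfolding upper_box_dim_def by (rule Limsup_bounded)
  then show False using lt by simp
qed

theorem theorem2:
  fixes X :: "real set" and a :: ereal
  assumes "X \<subseteq> {0..1}" and "upper_box_dim X = a"
  shows "upper_graph_box_dim X \<ge> 2 * a"
proof -
  define U where "U = upper_graph_box_dim X"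
  have Uge: "upper_box_dim (graph_of X f) \<le> U" if "uniformly_continuous_on X f" for f
    unfolding U_def upper_graph_box_dim_def by (rule SUP_upper) (use that in simp)
  have U0: "0 \<le> U"
    using Uge[of "\<lambda>_. 0"] box_dim_nonneg[of "graph_of X (\<lambda>_. 0)"] uniformly_continuous_on_const
    by (metis order.trans)
  have Ub: "ereal (2*b) \<le> U" if b0: "0 < b" and ba: "ereal b < a" for b
  proof -
    have "\<forall>\<gamma>>0. \<exists>\<delta>>0. \<delta> < \<gamma> \<and> \<delta> powr (-b) < real (grid_count \<delta> X)"
      using freq_of[OF b0] ba assms(2) by simp
    then obtain f where "uniformly_continuous_on X f" "ereal (2*b) \<le> upper_box_dim (graph_of X f)"
      using main_b[OF assms(1) b0] by blast
    then show ?thesis using Uge by (meson order.trans)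
  qed
  have "2 * a \<le> U"
  proof (cases a)
    case (real r)
    show ?thesis
    proof (cases "r \<le> 0")
      case True
      then have "2 * a \<le> 0" using real by simp
      then show ?thesis using U0 by (meson order.trans)
    next
      case False
      show ?thesis
      proof (rule ccontr)
        assume "\<not> ?thesis"
        then have Ult: "U < ereal (2*r)" using real by simp
        then obtain u where u: "U = ereal u" using U0 by (cases U) auto
        have u0: "0 \<le> u" using U0 u by simp
        have u2: "u < 2*r" using Ult u by simp
        define b where "b = (u/2 + r)/2"
        have "0 < b" "b < r" using u0 u2 False by (auto simp: b_def)
        then have "ereal (2*b) \<le> U" using Ub real by simp
        then show False using u u2 by (simp add: b_def)
      qed
    qed
  next
    case PInf
    have "U = \<infinity>"
    proof (rule ccontr)
      assume "U \<noteq> \<infinity>"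
      then obtain u where u: "U = ereal u" using U0 by (cases U) auto
      have "ereal (2*(\<bar>u\<bar>+1)) \<le> U" using Ub[of "\<bar>u\<bar>+1"] PInf by simp
      then show False using u by simp
    qed
    then show ?thesis by simp
  next
    case MInf
    then show ?thesis by simp
  qed
  then show ?thesis by (simp add: U_def)
qed


end
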